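(* Let $\Lambda_i\in\mathcal H_I$, $i\in[n]$, $\mathbb P$ atomless, and $Y\ge0$ a random variable with $1<\mathbb E^{\mathbb P}(Y)<\infty$. If $\overline\Lambda^*$ is attainable, then for all $X\in\mathcal X$ $$\mathop{\square}_{i=1}^n\sup_{\mathbb Q\in\mathcal P(\mathbb P,0,Y)}\Lambda_i\mathrm{VaR}^{\mathbb Q}(X)=\inf\{x\in\mathbb R:\mathbb E^{\mathbb P}(Y\mathds 1_{\{X>x\}})\le\overline\Lambda^*(x)\}.$$ If moreover the right-hand side equals a finite value $x^*$ and $\overline\Lambda^*$ is right-continuous at $x^*$, then an optimal allocation is $X_i=(X-x^* )\mathds 1_{A_i^*}+y_i^*$, where $(y_1^*,\dots,y_n^* )$ satisfies $\sum_iy_i^*=x^*$ and $\sum_i\Lambda_i(y_i^* )=\overline\Lambda^*(x^* )$, and $(A_1^*,\dots,A_n^* )\in\Pi_n(\Omega)$ satisfies $\mathbb E^{\mathbb P}(Y\mathds 1_{\{X>x^*\}\cap A_i^*})\le\Lambda_i(y_i^* )$ for all $i$ (such objects exist).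
   Context: $\Lambda\mathrm{VaR}^{\mathbb Q}(X)=\inf\{x\in\mathbb R:\mathbb Q(X>x)\le\Lambda(x)\}$; $\mathcal H_I$: increasing functions $\mathbb R\to(0,1)$. $\mathcal P(\mathbb P,0,Y)=\{\mathbb Q\ll\mathbb P: 0\le\mathrm d\mathbb Q/\mathrm d\mathbb P\le Y\}$. $\overline\Lambda^*(x)=\sup_{y_1+\dots+y_n=x}\sum_{i=1}^n\Lambda_i(y_i)$; it is attainable if for each $x\in\mathbb R$ the supremum is attained by some $(y_1,\dots,y_n)$ with $\sum_iy_i=x$. Inf-convolution $\mathop{\square}_i\rho_i(X)=\inf\{\sum_i\rho_i(X_i):X_i\in\mathcal X,\sum_iX_i=X\}$, $\mathcal X$ a set of real-valued random variables containing constants, closed under sums, differences, multiplication by indicators. $\Pi_n(\Omega)$: measurable partitions into $n$ sets. *)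

theory Defs
  imports "HOL-Probability.Probability"
begin

definition atomless :: "'a measure \<Rightarrow> bool" where
  "atomless M \<longleftrightarrow> (\<forall>A\<in>sets M. 0 < measure M A \<longrightarrow>
     (\<exists>B\<in>sets M. B \<subseteq> A \<and> 0 < measure M B \<and> measure M B < measure M A))"

definition H_I :: "(real \<Rightarrow> real) \<Rightarrow> bool" where
  "H_I L \<longleftrightarrow> mono L \<and> (\<forall>x. 0 < L x \<and> L x < 1)"

definition LVaR :: "(real \<Rightarrow> real) \<Rightarrow> 'a measure \<Rightarrow> ('a \<Rightarrow> real) \<Rightarrow> ereal" where
  "LVaR L Q X = Inf {ereal x | x. measure Q {\<omega> \<in> space Q. X \<omega> > x} \<le> L x}"

definition Pset :: "'a measure \<Rightarrow> ('a \<Rightarrow> real) \<Rightarrow> 'a measure set" where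
  "Pset M Y = {Q. \<exists>f\<in>borel_measurable M. (AE \<omega> in M. 0 \<le> f \<omega> \<and> f \<omega> \<le> Y \<omega>)
      \<and> Q = density M (\<lambda>\<omega>. ennreal (f \<omega>)) \<and> prob_space Q}"

definition robustLVaR :: "'a measure \<Rightarrow> ('a \<Rightarrow> real) \<Rightarrow> (real \<Rightarrow> real) \<Rightarrow> ('a \<Rightarrow> real) \<Rightarrow> ereal" where
  "robustLVaR M Y L X = (SUP Q\<in>Pset M Y. LVaR L Q X)"

definition infconv :: "'a measure \<Rightarrow> ('a \<Rightarrow> real) set \<Rightarrow> nat \<Rightarrow> (nat \<Rightarrow> ('a \<Rightarrow> real) \<Rightarrow> ereal)
    \<Rightarrow> ('a \<Rightarrow> real) \<Rightarrow> ereal" where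
  "infconv M XX n \<rho> X = Inf {(\<Sum>i<n. \<rho> i (Z i)) | Z.
      (\<forall>i<n. Z i \<in> XX) \<and> (\<forall>\<omega>\<in>space M. (\<Sum>i<n. Z i \<omega>) = X \<omega>)}"

definition Lbar :: "nat \<Rightarrow> (nat \<Rightarrow> real \<Rightarrow> real) \<Rightarrow> real \<Rightarrow> real" where
  "Lbar n L x = Sup {(\<Sum>i<n. L i (y i)) | y. (\<Sum>i<n. y i) = x}"

definition attainable :: "nat \<Rightarrow> (nat \<Rightarrow> real \<Rightarrow> real) \<Rightarrow> bool" where
  "attainable n L \<longleftrightarrow> (\<forall>x. \<exists>y. (\<Sum>i<n. y i) = x \<and> (\<Sum>i<n. L i (y i)) = Lbar n L x)"

end

theory Submission
  imports Defs
begin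

context finite_measure
begin

lemma atomless_small:
  assumes al: "atomless M" and A: "A \<in> sets M" and pos: "0 < measure M A" and e: "0 < e"
  shows "\<exists>B\<in>sets M. B \<subseteq> A \<and> 0 < measure M B \<and> measure M B < e"
proof -
  have half: "\<exists>B\<in>sets M. B \<subseteq> A \<and> 0 < measure M B \<and> measure M B \<le> measure M A / 2 ^ k" for k
  proof (induction k)
    case 0 then show ?case using A pos by auto
  next
    case (Suc k)
    then obtain B where B: "B \<in> sets M" "B \<subseteq> A" "0 < measure M B" "measure M B \<le> measure M A / 2 ^ k" by blast
    from al B obtain C where C: "C \<in> sets M" "C \<subseteq> B" "0 < measure M C" "measure M C < measure M B"
      unfolding atomless_def by blast
    have D: "measure M (B - C) = measure M B - measure M C" using finite_measure_Diff C B by blast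
    have "measure M B / 2 \<le> (measure M A / 2 ^ k) / 2" using B(4) by (intro divide_right_mono) auto
    also have "\<dots> = measure M A / 2 ^ Suc k" by simp
    finally have h: "measure M B / 2 \<le> measure M A / 2 ^ Suc k" .
    show ?case
    proof (cases "measure M C \<le> measure M B / 2")
      case True
      have "C \<subseteq> A" using C B by blast
      moreover have "measure M C \<le> measure M A / 2 ^ Suc k" using True h by linarith
      ultimately show ?thesis using C by blast
    next
      case False
      have "B - C \<subseteq> A" using B by blast
      moreover have "measure M (B - C) \<le> measure M A / 2 ^ Suc k" using False h D by linarith
      moreover have "0 < measure M (B - C)" using C(4) D by linarith
      moreover have "B - C \<in> sets M" using B C by blast
      ultimately show ?thesis by blast
    qed
  qed
  have "\<exists>k. measure M A / e < (2::real) ^ k" by (rule real_arch_pow) simp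
  then obtain k where k: "measure M A / e < (2::real) ^ k" by blast
  have k2: "measure M A < 2 ^ k * e" using k e by (simp add: pos_divide_less_eq)
  have k3: "measure M A / 2 ^ k < e"
  proof (subst pos_divide_less_eq)
    show "0 < (2::real) ^ k" by simp
    show "measure M A < e * 2 ^ k" using k2 by (metis mult.commute)
  qed
  obtain B where B: "B \<in> sets M" "B \<subseteq> A" "0 < measure M B" "measure M B \<le> measure M A / 2 ^ k"
    using half[of k] by blast
  have "measure M B < e" using B(4) k3 by linarith
  with B show ?thesis by blast
qed

lemma sierpinski:
  assumes al: "atomless M" and A: "A \<in> sets M" and t0: "0 \<le> t" and tA: "t \<le> measure M A"
  shows "\<exists>B\<in>sets M. B \<subseteq> A \<and> measure M B = t"
proof -
  define F where "F B = {C. C \<in> sets M \<and> C \<subseteq> A - B \<and> measure M C \<le> t - measure M B}" for B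
  have ex: "\<exists>C. C \<in> F B \<and> (\<forall>D\<in>F B. measure M D \<le> 2 * measure M C)"
    if B: "B \<in> sets M" "measure M B \<le> t" for B
  proof -
    let ?S = "measure M ` F B"
    have ne: "{} \<in> F B" using B by (auto simp: F_def)
    have bdd: "bdd_above ?S"
      by (rule bdd_aboveI[of _ "measure M (space M)"]) (auto simp: F_def intro!: finite_measure_mono dest: sets.sets_into_space)
    have Sne: "?S \<noteq> {}" using ne by blast
    have up: "measure M D \<le> Sup ?S" if "D \<in> F B" for D
      by (rule cSup_upper[OF _ bdd]) (use that in blast)
    show ?thesis
    proof (cases "Sup ?S = 0")
      case True
      then have "\<forall>D\<in>F B. measure M D \<le> 0" using up by simp
      then show ?thesis using ne by (intro exI[of _ "{}"]) simp
    next
      case False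
      have "0 \<le> Sup ?S" using up[OF ne] by simp
      with False have half: "Sup ?S / 2 < Sup ?S" by simp
      from less_cSupD[OF Sne half] obtain s where s: "s \<in> ?S" "Sup ?S / 2 < s" by blast
      then obtain C where C: "C \<in> F B" "measure M C = s" by blast
      have "\<forall>D\<in>F B. measure M D \<le> 2 * measure M C"
      proof
        fix D assume "D \<in> F B"
        then have "measure M D \<le> Sup ?S" by (rule up)
        then show "measure M D \<le> 2 * measure M C" using s C by simp
      qed
      with C show ?thesis by blast
    qed
  qed
  obtain Cf where Cf: "\<And>B. B \<in> sets M \<and> measure M B \<le> t \<Longrightarrow> Cf B \<in> F B \<and> (\<forall>D\<in>F B. measure M D \<le> 2 * measure M (Cf B))"
    using ex by metis
  define Bs where "Bs = rec_nat {} (\<lambda>_ B. B \<union> Cf B)"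
  have Bs0: "Bs 0 = {}" and BsS: "Bs (Suc k) = Bs k \<union> Cf (Bs k)" for k by (simp_all add: Bs_def)
  have inv: "Bs k \<in> sets M \<and> Bs k \<subseteq> A \<and> measure M (Bs k) \<le> t" for k
  proof (induction k)
    case 0 then show ?case using t0 by (simp add: Bs0)
  next
    case (Suc k)
    then have c: "Cf (Bs k) \<in> F (Bs k)" using Cf by blast
    then have c2: "Cf (Bs k) \<in> sets M" "Cf (Bs k) \<subseteq> A - Bs k" "measure M (Cf (Bs k)) \<le> t - measure M (Bs k)"
      by (auto simp: F_def)
    have "measure M (Bs k \<union> Cf (Bs k)) = measure M (Bs k) + measure M (Cf (Bs k))"
      using c2 Suc by (intro finite_measure_Union) auto
    then show ?case using c2 Suc by (auto simp: BsS)
  qed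
  have CS: "measure M (Cf (Bs k)) = measure M (Bs (Suc k)) - measure M (Bs k)" for k
  proof -
    have c: "Cf (Bs k) \<in> F (Bs k)" using Cf inv by blast
    then have c2: "Cf (Bs k) \<in> sets M" "Cf (Bs k) \<subseteq> A - Bs k"
      by (auto simp: F_def)
    have "measure M (Bs k \<union> Cf (Bs k)) = measure M (Bs k) + measure M (Cf (Bs k))"
      using c2 inv by (intro finite_measure_Union) auto
    then show ?thesis by (simp add: BsS)
  qed
  have inc: "incseq Bs" by (rule incseq_SucI) (simp add: BsS)
  define B where "B = (\<Union>k. Bs k)"
  have lim: "(\<lambda>k. measure M (Bs k)) \<longlonglongrightarrow> measure M B"
    unfolding B_def using inv inc by (intro finite_Lim_measure_incseq) auto
  have Bsets: "B \<in> sets M" using inv by (auto simp: B_def)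
  have BA: "B \<subseteq> A" using inv by (auto simp: B_def)
  have Bt: "measure M B \<le> t" using lim inv by (intro LIMSEQ_le_const2[OF lim]) auto
  have lim0: "(\<lambda>k. measure M (Cf (Bs k))) \<longlonglongrightarrow> 0"
  proof -
    have "(\<lambda>k. measure M (Bs (Suc k)) - measure M (Bs k)) \<longlonglongrightarrow> measure M B - measure M B"
      by (intro tendsto_diff lim) (rule LIMSEQ_Suc[OF lim])
    then show ?thesis by (simp add: CS)
  qed
  show ?thesis
  proof (cases "measure M B = t")
    case True then show ?thesis using Bsets BA by blast
  next
    case False
    with Bt have lt: "measure M B < t" by auto
    have "measure M (A - B) = measure M A - measure M B" using finite_measure_Diff A Bsets BA by blast
    with lt tA have "0 < measure M (A - B)" by auto
    then obtain D where D: "D \<in> sets M" "D \<subseteq> A - B" "0 < measure M D" "measure M D < t - measure M B"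
      using atomless_small[OF al, of "A - B" "t - measure M B"] A Bsets lt by auto
    have "D \<in> F (Bs k)" for k
    proof -
      have "measure M (Bs k) \<le> measure M B" using Bsets by (intro finite_measure_mono) (auto simp: B_def)
      then show ?thesis using D by (auto simp: F_def B_def)
    qed
    then have "measure M D \<le> 2 * measure M (Cf (Bs k))" for k using Cf inv by blast
    then have "measure M D / 2 \<le> measure M (Cf (Bs k))" for k by (metis (no_types) divide_le_eq_numeral1(1) mult.commute)
    then have "measure M D / 2 \<le> 0" by (intro LIMSEQ_le_const[OF lim0]) auto
    with D show ?thesis by auto
  qed
qed

lemma partition_measure:
  assumes al: "atomless M"
  shows "S \<in> sets M \<Longrightarrow> (\<forall>i<Suc m. 0 \<le> t i) \<Longrightarrow> measure M S \<le> (\<Sum>i<Suc m. t i) \<Longrightarrow>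
    \<exists>A. (\<forall>i<Suc m. A i \<in> sets M \<and> A i \<subseteq> S \<and> measure M (A i) \<le> t i)
       \<and> disjoint_family_on A {..<Suc m} \<and> (\<Union>i<Suc m. A i) = S"
proof (induction m arbitrary: S)
  case 0
  then show ?case by (intro exI[of _ "\<lambda>_. S"]) (auto simp: disjoint_family_on_def)
next
  case (Suc m)
  define u where "u = min (t (Suc m)) (measure M S)"
  have u0: "0 \<le> u" using Suc.prems by (simp add: u_def)
  obtain B where B: "B \<in> sets M" "B \<subseteq> S" "measure M B = u"
    using sierpinski[OF al Suc.prems(1) u0] unfolding u_def by force
  have S'm: "measure M (S - B) = measure M S - u" using finite_measure_Diff[OF Suc.prems(1) B(1,2)] B(3) by simp
  have "(\<Sum>i<Suc (Suc m). t i) = (\<Sum>i<Suc m. t i) + t (Suc m)" by simp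
  moreover have "0 \<le> (\<Sum>i<Suc m. t i)" using Suc.prems(2) by (intro sum_nonneg) auto
  ultimately have SBm: "measure M (S - B) \<le> (\<Sum>i<Suc m. t i)"
  proof (cases "t (Suc m) \<le> measure M S")
    case True
    then have "u = t (Suc m)" by (simp add: u_def)
    then show ?thesis using S'm Suc.prems(3) \<open>(\<Sum>i<Suc (Suc m). t i) = (\<Sum>i<Suc m. t i) + t (Suc m)\<close> by linarith
  next
    case False
    then have "u = measure M S" by (simp add: u_def)
    then show ?thesis using S'm \<open>0 \<le> (\<Sum>i<Suc m. t i)\<close> by linarith
  qed
  have SBs: "S - B \<in> sets M" using Suc.prems(1) B by blast
  have tn: "\<forall>i<Suc m. 0 \<le> t i" using Suc.prems(2) by simp
  obtain A where A: "\<forall>i<Suc m. A i \<in> sets M \<and> A i \<subseteq> S - B \<and> measure M (A i) \<le> t i"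
      "disjoint_family_on A {..<Suc m}" "(\<Union>i<Suc m. A i) = S - B"
    using Suc.IH[OF SBs tn SBm] by blast
  define A' where "A' = A(Suc m := B)"
  have "\<forall>i<Suc (Suc m). A' i \<in> sets M \<and> A' i \<subseteq> S \<and> measure M (A' i) \<le> t i"
  proof (intro allI impI)
    fix i assume i: "i < Suc (Suc m)"
    show "A' i \<in> sets M \<and> A' i \<subseteq> S \<and> measure M (A' i) \<le> t i"
    proof (cases "i = Suc m")
      case True then show ?thesis using B by (simp add: A'_def u_def)
    next
      case False then have "i < Suc m" using i by simp
      then show ?thesis using A(1) False by (auto simp: A'_def)
    qed
  qed
  moreover have "disjoint_family_on A' {..<Suc (Suc m)}"
    unfolding disjoint_family_on_def
  proof (intro ballI impI)
    fix i j assume i: "i \<in> {..<Suc (Suc m)}" and j: "j \<in> {..<Suc (Suc m)}" and ij: "i \<noteq> j"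
    show "A' i \<inter> A' j = {}"
    proof (cases "i = Suc m")
      case True
      then have "j < Suc m" using j ij by auto
      then show ?thesis using True A(1) ij by (auto simp: A'_def)
    next
      case False
      then have i': "i < Suc m" using i by auto
      show ?thesis
      proof (cases "j = Suc m")
        case True then show ?thesis using i' A(1) ij by (auto simp: A'_def)
      next
        case False
        then have "j < Suc m" using j by auto
        then show ?thesis using i' A(2) ij \<open>i \<noteq> Suc m\<close> False
          by (auto simp: A'_def disjoint_family_on_def)
      qed
    qed
  qed
  moreover have "(\<Union>i<Suc (Suc m). A' i) = S"
  proof -
    have "(\<Union>i<Suc (Suc m). A' i) = A' (Suc m) \<union> (\<Union>i<Suc m. A' i)"
      by (simp add: lessThan_Suc)
    also have "(\<Union>i<Suc m. A' i) = (\<Union>i<Suc m. A i)" by (auto simp: A'_def)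
    finally show ?thesis using A(3) B(2) by (auto simp: A'_def)
  qed
  ultimately show ?case by blast
qed

end

lemma emeasure_density_int:
  fixes f :: "'a \<Rightarrow> real"
  assumes f: "f \<in> borel_measurable M" and f0: "\<forall>\<omega>\<in>space M. 0 \<le> f \<omega>" and fi: "integrable M f"
    and B: "B \<in> sets M"
  shows "emeasure (density M (\<lambda>\<omega>. ennreal (f \<omega>))) B = ennreal (integral\<^sup>L M (\<lambda>\<omega>. f \<omega> * indicator B \<omega>))"
proof -
  have "emeasure (density M (\<lambda>\<omega>. ennreal (f \<omega>))) B = (\<integral>\<^sup>+ x. ennreal (f x) * indicator B x \<partial>M)"
    using f B by (intro emeasure_density) auto
  also have "\<dots> = (\<integral>\<^sup>+ x. ennreal (f x * indicator B x) \<partial>M)"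
    by (intro nn_integral_cong) (auto split: split_indicator)
  also have "\<dots> = ennreal (integral\<^sup>L M (\<lambda>\<omega>. f \<omega> * indicator B \<omega>))"
    using f0 by (intro nn_integral_eq_integral integrable_real_mult_indicator B fi AE_I2) (auto split: split_indicator)
  finally show ?thesis .
qed

lemma measure_density_int:
  fixes f :: "'a \<Rightarrow> real"
  assumes f: "f \<in> borel_measurable M" and f0: "\<forall>\<omega>\<in>space M. 0 \<le> f \<omega>" and fi: "integrable M f"
    and B: "B \<in> sets M"
  shows "measure (density M (\<lambda>\<omega>. ennreal (f \<omega>))) B = integral\<^sup>L M (\<lambda>\<omega>. f \<omega> * indicator B \<omega>)"
proof -
  have "0 \<le> integral\<^sup>L M (\<lambda>\<omega>. f \<omega> * indicator B \<omega>)"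
    using f0 by (intro integral_nonneg_AE AE_I2) (auto split: split_indicator)
  then show ?thesis
    unfolding measure_def using emeasure_density_int[OF assms] by simp
qed

lemma density_finite:
  fixes f :: "'a \<Rightarrow> real"
  assumes f: "f \<in> borel_measurable M" and f0: "\<forall>\<omega>\<in>space M. 0 \<le> f \<omega>" and fi: "integrable M f"
  shows "finite_measure (density M (\<lambda>\<omega>. ennreal (f \<omega>)))"
  by (rule finite_measureI) (simp add: emeasure_density_int[OF assms sets.top])

lemma int_zero_if_null:
  fixes f :: "'a \<Rightarrow> real"
  assumes "prob_space M" and f: "f \<in> borel_measurable M" and fi: "integrable M f"
    and B: "B \<in> sets M" and B0: "measure M B = 0"
  shows "integral\<^sup>L M (\<lambda>\<omega>. f \<omega> * indicator B \<omega>) = 0"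
proof -
  interpret prob_space M by fact
  have "B \<in> null_sets M" using B B0 by (simp add: emeasure_eq_measure null_sets_def)
  then have "AE x in M. x \<notin> B" by (rule AE_not_in)
  then have "AE x in M. f x * indicator B x = 0" by eventually_elim simp
  then show ?thesis by (rule integral_eq_zero_AE)
qed

lemma int_pos_if_pos:
  fixes f :: "'a \<Rightarrow> real"
  assumes "prob_space M" and f: "f \<in> borel_measurable M" and fi: "integrable M f"
    and f0: "\<forall>\<omega>\<in>space M. 0 \<le> f \<omega>"
    and B: "B \<in> sets M" and Bp: "\<forall>\<omega>\<in>B. 0 < f \<omega>" and Bm: "0 < measure M B"
  shows "0 < integral\<^sup>L M (\<lambda>\<omega>. f \<omega> * indicator B \<omega>)"
proof -
  interpret prob_space M by fact
  have nn: "AE x in M. 0 \<le> f x * indicator B x" using f0 by (intro AE_I2) (auto split: split_indicator)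
  have ge: "0 \<le> integral\<^sup>L M (\<lambda>\<omega>. f \<omega> * indicator B \<omega>)" using nn by (rule integral_nonneg_AE)
  show ?thesis
  proof (rule ccontr)
    assume "\<not> ?thesis"
    with ge have "integral\<^sup>L M (\<lambda>\<omega>. f \<omega> * indicator B \<omega>) = 0" by simp
    then have "AE x in M. f x * indicator B x = 0"
      using integral_nonneg_eq_0_iff_AE[OF integrable_real_mult_indicator[OF B fi] nn] by blast
    then have ae: "AE x in M. x \<notin> B"
      by eventually_elim (metis Bp indicator_simps(1) less_irrefl mult.right_neutral)
    have iff: "(AE x in M. x \<notin> B) \<longleftrightarrow> emeasure M B = 0"
      by (rule AE_iff_measurable[OF B]) (use B sets.sets_into_space in blast)
    have "emeasure M B = 0" using iff ae by blast
    then show False using Bm by (simp add: emeasure_eq_measure)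
  qed
qed

lemma density_atomless:
  fixes f :: "'a \<Rightarrow> real"
  assumes P: "prob_space M" and al: "atomless M" and f: "f \<in> borel_measurable M"
    and f0: "\<forall>\<omega>\<in>space M. 0 \<le> f \<omega>" and fi: "integrable M f"
  shows "atomless (density M (\<lambda>\<omega>. ennreal (f \<omega>)))"
  unfolding atomless_def
proof (intro ballI impI)
  let ?N = "density M (\<lambda>\<omega>. ennreal (f \<omega>))"
  interpret prob_space M by fact
  interpret N: finite_measure ?N by (rule density_finite[OF f f0 fi])
  fix A assume A: "A \<in> sets ?N" and Ap: "0 < measure ?N A"
  then have As: "A \<in> sets M" by simp
  define A' where "A' = A \<inter> {\<omega>\<in>space M. 0 < f \<omega>}"
  have A's: "A' \<in> sets M" unfolding A'_def using As f by measurable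
  have eqA: "measure ?N A = measure ?N A'"
  proof -
    have "integral\<^sup>L M (\<lambda>\<omega>. f \<omega> * indicator A \<omega>) = integral\<^sup>L M (\<lambda>\<omega>. f \<omega> * indicator A' \<omega>)"
    proof (intro Bochner_Integration.integral_cong refl)
      fix \<omega> assume "\<omega> \<in> space M"
      then show "f \<omega> * indicator A \<omega> = f \<omega> * indicator A' \<omega>"
        using f0 by (cases "f \<omega> = 0") (auto simp: A'_def split: split_indicator)
    qed
    then show ?thesis using measure_density_int[OF f f0 fi As] measure_density_int[OF f f0 fi A's] by simp
  qed
  have "0 < measure M A'"
  proof (rule ccontr)
    assume "\<not> 0 < measure M A'"
    then have "measure M A' = 0" using measure_nonneg[of M A'] by linarith
    then have "measure ?N A' = 0" using int_zero_if_null[OF P f fi A's] measure_density_int[OF f f0 fi A's] by simp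
    with eqA Ap show False by simp
  qed
  with al A's obtain C where C: "C \<in> sets M" "C \<subseteq> A'" "0 < measure M C" "measure M C < measure M A'"
    unfolding atomless_def by blast
  have pos: "\<forall>\<omega>\<in>A'. 0 < f \<omega>" by (simp add: A'_def)
  have Cp: "0 < measure ?N C"
    using int_pos_if_pos[OF P f fi f0 C(1) _ C(3)] pos C(2) measure_density_int[OF f f0 fi C(1)] by auto
  have D: "A' - C \<in> sets M" using A's C by blast
  have "measure M (A' - C) = measure M A' - measure M C" using finite_measure_Diff[OF A's C(1,2)] .
  then have "0 < measure M (A' - C)" using C(4) by simp
  then have Dp: "0 < measure ?N (A' - C)"
    using int_pos_if_pos[OF P f fi f0 D _] pos measure_density_int[OF f f0 fi D] by auto
  have "measure ?N A' = measure ?N (C \<union> (A' - C))" using C(2) by (simp add: Un_absorb1)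
  also have "\<dots> = measure ?N C + measure ?N (A' - C)" using C D by (intro N.finite_measure_Union) auto
  finally have "measure ?N C < measure ?N A" using eqA Dp by simp
  moreover have "C \<subseteq> A" using C(2) by (auto simp: A'_def)
  ultimately show "\<exists>B\<in>sets ?N. B \<subseteq> A \<and> 0 < measure ?N B \<and> measure ?N B < measure ?N A"
    using C(1) Cp by (intro bexI[of _ C]) auto
qed

lemma exists_Q:
  fixes Y Z :: "'a \<Rightarrow> real"
  assumes P: "prob_space M" and Ym[measurable]: "Y \<in> borel_measurable M" and Y0: "\<forall>\<omega>\<in>space M. 0 \<le> Y \<omega>"
    and Yi: "integrable M Y" and Y1: "1 < integral\<^sup>L M Y" and Zm[measurable]: "Z \<in> borel_measurable M"
    and apos: "0 < integral\<^sup>L M (\<lambda>\<omega>. Y \<omega> * indicator {\<omega>\<in>space M. x < Z \<omega>} \<omega>)"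
  shows "\<exists>Q\<in>Pset M Y. measure Q {\<omega>\<in>space Q. x < Z \<omega>}
            = min 1 (integral\<^sup>L M (\<lambda>\<omega>. Y \<omega> * indicator {\<omega>\<in>space M. x < Z \<omega>} \<omega>))"
proof -
  define S where "S = {\<omega>\<in>space M. x < Z \<omega>}"
  define T where "T = {\<omega>\<in>space M. \<not> x < Z \<omega>}"
  have Ss[measurable]: "S \<in> sets M" unfolding S_def by measurable
  have Ts[measurable]: "T \<in> sets M" unfolding T_def by measurable
  define a where "a = integral\<^sup>L M (\<lambda>\<omega>. Y \<omega> * indicator S \<omega>)"
  define b where "b = integral\<^sup>L M (\<lambda>\<omega>. Y \<omega> * indicator T \<omega>)"
  have a0: "0 < a" using apos by (simp add: a_def S_def)
  have b0: "0 \<le> b" unfolding b_def using Y0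
    by (intro integral_nonneg_AE AE_I2) (auto split: split_indicator)
  have iS: "integrable M (\<lambda>\<omega>. Y \<omega> * indicator B \<omega>)" if "B \<in> sets M" for B
    using integrable_real_mult_indicator[OF that Yi] .
  have ab: "a + b = integral\<^sup>L M Y"
  proof -
    have "a + b = integral\<^sup>L M (\<lambda>\<omega>. Y \<omega> * indicator S \<omega> + Y \<omega> * indicator T \<omega>)"
      unfolding a_def b_def by (rule Bochner_Integration.integral_add[symmetric]) (simp_all add: iS)
    also have "\<dots> = integral\<^sup>L M Y"
    proof (rule Bochner_Integration.integral_cong[OF refl])
      fix \<omega> assume "\<omega> \<in> space M"
      then show "Y \<omega> * indicator S \<omega> + Y \<omega> * indicator T \<omega> = Y \<omega>"
        by (cases "x < Z \<omega>") (simp_all add: S_def T_def indicator_def)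
    qed
    finally show ?thesis .
  qed
  define \<alpha> where "\<alpha> = min 1 (1 / a)"
  define \<beta> where "\<beta> = (1 - \<alpha> * a) / b"
  have \<alpha>a: "\<alpha> * a = min 1 a"
  proof (cases "1 \<le> a")
    case True
    then have "1 / a \<le> 1" by simp
    then have "\<alpha> = 1 / a" by (simp add: \<alpha>_def)
    then show ?thesis using True a0 by simp
  next
    case False
    then have "1 \<le> 1 / a" using a0 by (simp add: le_divide_eq)
    then have "\<alpha> = 1" by (simp add: \<alpha>_def)
    then show ?thesis using False by simp
  qed
  have \<alpha>01: "0 \<le> \<alpha>" "\<alpha> \<le> 1" using a0 by (simp_all add: \<alpha>_def)
  have \<beta>b: "\<beta> * b = 1 - \<alpha> * a"
  proof (cases "b = 0")
    case True
    then have "1 \<le> a" using ab Y1 by simp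
    then show ?thesis using \<alpha>a True by simp
  next
    case False then show ?thesis by (simp add: \<beta>_def)
  qed
  have \<beta>01: "0 \<le> \<beta>" "\<beta> \<le> 1"
  proof -
    have "0 \<le> 1 - \<alpha> * a" using \<alpha>a by simp
    then show "0 \<le> \<beta>" using b0 by (simp add: \<beta>_def)
    show "\<beta> \<le> 1"
    proof (cases "1 \<le> a")
      case True then have "1 - \<alpha> * a = 0" using \<alpha>a by simp
      then show ?thesis by (simp add: \<beta>_def)
    next
      case False
      then have "1 - \<alpha> * a = 1 - a" using \<alpha>a by simp
      moreover have "1 - a < b" using ab Y1 by simp
      ultimately have e: "\<beta> = (1 - a) / b" "0 < b" "1 - a < b" using False by (simp_all add: \<beta>_def)
      then show ?thesis by (simp add: pos_divide_le_eq)
    qed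
  qed
  define g where "g \<omega> = \<alpha> * (Y \<omega> * indicator S \<omega>) + \<beta> * (Y \<omega> * indicator T \<omega>)" for \<omega>
  have gm[measurable]: "g \<in> borel_measurable M" unfolding g_def by measurable
  have g0: "\<forall>\<omega>\<in>space M. 0 \<le> g \<omega>" using Y0 \<alpha>01 \<beta>01 by (auto simp: g_def split: split_indicator)
  have gY: "\<forall>\<omega>\<in>space M. g \<omega> \<le> Y \<omega>"
  proof
    fix \<omega> assume \<omega>: "\<omega> \<in> space M"
    show "g \<omega> \<le> Y \<omega>"
    proof (cases "x < Z \<omega>")
      case True
      then have "g \<omega> = \<alpha> * Y \<omega>" using \<omega> by (simp add: g_def S_def T_def)
      then show ?thesis using \<alpha>01 Y0 \<omega> by (simp add: mult_left_le_one_le)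
    next
      case False
      then have "g \<omega> = \<beta> * Y \<omega>" using \<omega> by (simp add: g_def S_def T_def)
      then show ?thesis using \<beta>01 Y0 \<omega> by (simp add: mult_left_le_one_le)
    qed
  qed
  have gi: "integrable M g" unfolding g_def using iS Ss Ts by simp
  have gint: "integral\<^sup>L M (\<lambda>\<omega>. g \<omega> * indicator B \<omega>)
      = \<alpha> * integral\<^sup>L M (\<lambda>\<omega>. Y \<omega> * indicator (S \<inter> B) \<omega>) + \<beta> * integral\<^sup>L M (\<lambda>\<omega>. Y \<omega> * indicator (T \<inter> B) \<omega>)"
    if B: "B \<in> sets M" for B
  proof -
    have "(\<lambda>\<omega>. g \<omega> * indicator B \<omega>) = (\<lambda>\<omega>. \<alpha> * (Y \<omega> * indicator (S \<inter> B) \<omega>) + \<beta> * (Y \<omega> * indicator (T \<inter> B) \<omega>))"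
      by (rule ext) (simp add: g_def indicator_inter_arith distrib_right)
    then show ?thesis using iS B Ss Ts by simp
  qed
  define Q where "Q = density M (\<lambda>\<omega>. ennreal (g \<omega>))"
  have spQ: "space Q = space M" by (simp add: Q_def)
  have "emeasure Q (space Q) = ennreal (integral\<^sup>L M (\<lambda>\<omega>. g \<omega> * indicator (space M) \<omega>))"
    using emeasure_density_int[OF gm g0 gi sets.top] by (simp add: Q_def)
  also have "S \<inter> space M = S" "T \<inter> space M = T" by (auto simp: S_def T_def)
  then have "integral\<^sup>L M (\<lambda>\<omega>. g \<omega> * indicator (space M) \<omega>) = \<alpha> * a + \<beta> * b"
    using gint[OF sets.top] by (simp add: a_def b_def)
  finally have "emeasure Q (space Q) = 1" using \<beta>b by simp
  then have pQ: "prob_space Q" by (rule prob_spaceI)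
  have "Q \<in> Pset M Y" unfolding Pset_def
    using gm g0 gY pQ by (auto simp: Q_def intro!: AE_I2)
  moreover have "measure Q {\<omega>\<in>space Q. x < Z \<omega>} = min 1 a"
  proof -
    have "measure Q S = integral\<^sup>L M (\<lambda>\<omega>. g \<omega> * indicator S \<omega>)"
      unfolding Q_def by (rule measure_density_int[OF gm g0 gi Ss])
    also have "S \<inter> S = S" "T \<inter> S = {}" by (auto simp: S_def T_def)
    then have "integral\<^sup>L M (\<lambda>\<omega>. g \<omega> * indicator S \<omega>) = \<alpha> * a"
      using gint[OF Ss] by (simp add: a_def)
    finally show ?thesis using \<alpha>a spQ by (simp add: S_def)
  qed
  ultimately show ?thesis by (auto simp: a_def S_def)
qed


lemma Q_le:
  fixes Y :: "'a \<Rightarrow> real"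
  assumes Ym[measurable]: "Y \<in> borel_measurable M" and Y0: "\<forall>\<omega>\<in>space M. 0 \<le> Y \<omega>"
    and Yi: "integrable M Y" and Q: "Q \<in> Pset M Y" and B[measurable]: "B \<in> sets M"
  shows "measure Q B \<le> integral\<^sup>L M (\<lambda>\<omega>. Y \<omega> * indicator B \<omega>)"
proof -
  from Q obtain g where gm[measurable]: "g \<in> borel_measurable M" and gae: "AE \<omega> in M. 0 \<le> g \<omega> \<and> g \<omega> \<le> Y \<omega>"
    and Qd: "Q = density M (\<lambda>\<omega>. ennreal (g \<omega>))" unfolding Pset_def by blast
  have i0: "0 \<le> integral\<^sup>L M (\<lambda>\<omega>. Y \<omega> * indicator B \<omega>)"
    using Y0 by (intro integral_nonneg_AE AE_I2) (auto split: split_indicator)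
  have "emeasure Q B = (\<integral>\<^sup>+ x. ennreal (g x) * indicator B x \<partial>M)"
    unfolding Qd by (rule emeasure_density) measurable
  also have "\<dots> \<le> (\<integral>\<^sup>+ x. ennreal (Y x * indicator B x) \<partial>M)"
    by (intro nn_integral_mono_AE) (use gae in \<open>eventually_elim, auto simp: ennreal_leI split: split_indicator\<close>)
  also have "\<dots> = ennreal (integral\<^sup>L M (\<lambda>\<omega>. Y \<omega> * indicator B \<omega>))"
    using Y0 by (intro nn_integral_eq_integral integrable_real_mult_indicator B Yi AE_I2) (auto split: split_indicator)
  finally have le: "emeasure Q B \<le> ennreal (integral\<^sup>L M (\<lambda>\<omega>. Y \<omega> * indicator B \<omega>))" .
  have "measure Q B = enn2real (emeasure Q B)" by (simp add: measure_def)
  also have "\<dots> \<le> enn2real (ennreal (integral\<^sup>L M (\<lambda>\<omega>. Y \<omega> * indicator B \<omega>)))"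
    by (rule enn2real_mono[OF le]) simp
  also have "\<dots> = integral\<^sup>L M (\<lambda>\<omega>. Y \<omega> * indicator B \<omega>)" using i0 by simp
  finally show ?thesis .
qed

lemma robust_eq:
  fixes Y Z :: "'a \<Rightarrow> real"
  assumes P: "prob_space M" and Ym[measurable]: "Y \<in> borel_measurable M" and Y0: "\<forall>\<omega>\<in>space M. 0 \<le> Y \<omega>"
    and Yi: "integrable M Y" and Y1: "1 < integral\<^sup>L M Y" and HL: "H_I L"
    and Zm[measurable]: "Z \<in> borel_measurable M"
  shows "robustLVaR M Y L Z = Inf {ereal x | x. integral\<^sup>L M (\<lambda>\<omega>. Y \<omega> * indicator {\<omega>\<in>space M. x < Z \<omega>} \<omega>) \<le> L x}"
    (is "_ = Inf ?S")
proof (rule antisym)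
  show "robustLVaR M Y L Z \<le> Inf ?S"
    unfolding robustLVaR_def
  proof (rule SUP_least)
    fix Q assume Q: "Q \<in> Pset M Y"
    then have spQ: "space Q = space M" unfolding Pset_def by auto
    show "LVaR L Q Z \<le> Inf ?S" unfolding LVaR_def
    proof (rule Inf_superset_mono, safe)
      fix x assume x: "integral\<^sup>L M (\<lambda>\<omega>. Y \<omega> * indicator {\<omega>\<in>space M. x < Z \<omega>} \<omega>) \<le> L x"
      have "measure Q {\<omega>\<in>space M. x < Z \<omega>} \<le> integral\<^sup>L M (\<lambda>\<omega>. Y \<omega> * indicator {\<omega>\<in>space M. x < Z \<omega>} \<omega>)"
        by (rule Q_le[OF Ym Y0 Yi Q]) measurable
      with x spQ show "\<exists>x'. ereal x = ereal x' \<and> measure Q {\<omega> \<in> space Q. x' < Z \<omega>} \<le> L x'" by auto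
    qed
  qed
next
  show "Inf ?S \<le> robustLVaR M Y L Z"
  proof (rule dense_le)
    fix e assume e: "e < Inf ?S"
    show "e \<le> robustLVaR M Y L Z"
    proof (cases e)
      case (real x)
      define sv where "sv = integral\<^sup>L M (\<lambda>\<omega>. Y \<omega> * indicator {\<omega>\<in>space M. x < Z \<omega>} \<omega>)"
      have "\<not> sv \<le> L x"
      proof
        assume "sv \<le> L x"
        then have "ereal x \<in> ?S" by (auto simp: sv_def)
        then have "Inf ?S \<le> ereal x" by (rule Inf_lower)
        with e real show False by simp
      qed
      then have svL: "L x < sv" by simp
      have L01: "0 < L x" "L x < 1" using HL by (auto simp: H_I_def)
      then have "0 < sv" using svL by simp
      then obtain Q where Q: "Q \<in> Pset M Y" and mQ: "measure Q {\<omega>\<in>space Q. x < Z \<omega>} = min 1 sv"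
        using exists_Q[OF P Ym Y0 Yi Y1 Zm] unfolding sv_def by blast
      have spQ: "space Q = space M" and sQ: "sets Q = sets M" and pQ: "prob_space Q"
        using Q unfolding Pset_def by auto
      have "ereal x \<le> LVaR L Q Z" unfolding LVaR_def
      proof (rule Inf_greatest, safe)
        fix x' assume x': "measure Q {\<omega>\<in>space Q. x' < Z \<omega>} \<le> L x'"
        show "ereal x \<le> ereal x'"
        proof (rule ccontr)
          assume "\<not> ereal x \<le> ereal x'"
          then have xx: "x' < x" by simp
          have "measure Q {\<omega>\<in>space Q. x < Z \<omega>} \<le> measure Q {\<omega>\<in>space Q. x' < Z \<omega>}"
          proof (rule finite_measure.finite_measure_mono)
            show "finite_measure Q" using pQ by (rule prob_space.axioms(1))
            show "{\<omega>\<in>space Q. x < Z \<omega>} \<subseteq> {\<omega>\<in>space Q. x' < Z \<omega>}" using xx by auto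
            have "{\<omega>\<in>space M. x' < Z \<omega>} \<in> sets M" by measurable
            then show "{\<omega>\<in>space Q. x' < Z \<omega>} \<in> sets Q" using spQ sQ by simp
          qed
          moreover have "L x' \<le> L x" using HL xx by (auto simp: H_I_def mono_def)
          ultimately have "min 1 sv \<le> L x" using x' mQ by linarith
          then show False using svL L01 by linarith
        qed
      qed
      also have "LVaR L Q Z \<le> robustLVaR M Y L Z" unfolding robustLVaR_def using Q by (rule SUP_upper)
      finally show ?thesis using real by simp
    next
      case PInf with e show ?thesis by simp
    next
      case MInf then show ?thesis by simp
    qed
  qed
qed

lemma sum_Inf_bound:
  fixes P :: "nat \<Rightarrow> real \<Rightarrow> bool" and c :: ereal
  assumes "\<And>x. (\<forall>i<n. P i (x i)) \<Longrightarrow> c \<le> ereal (\<Sum>i<n. x i)"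
  shows "c \<le> (\<Sum>i<n. Inf {ereal y | y. P i y})"
  using assms
proof (induction n arbitrary: c)
  case 0
  then show ?case by (simp add: zero_ereal_def)
next
  case (Suc n)
  define A where "A = (\<Sum>i<n. Inf {ereal y | y. P i y})"
  define I where "I = Inf {ereal y | y. P n y}"
  have key: "c \<le> A + ereal y" if y: "P n y" for y
  proof -
    have "c - ereal y \<le> A" unfolding A_def
    proof (rule Suc.IH)
      fix x assume x: "\<forall>i<n. P i (x i)"
      define x' where "x' = x(n := y)"
      have "\<forall>i<Suc n. P i (x' i)" using x y by (auto simp: x'_def less_Suc_eq)
      then have "c \<le> ereal (\<Sum>i<Suc n. x' i)" by (rule Suc.prems)
      also have "(\<Sum>i<Suc n. x' i) = (\<Sum>i<n. x i) + y" by (simp add: x'_def)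
      finally show "c - ereal y \<le> ereal (\<Sum>i<n. x i)" by (cases c) auto
    qed
    then show ?thesis by (cases c; cases A) auto
  qed
  have "c \<le> A + I"
  proof (cases A)
    case PInf then show ?thesis by simp
  next
    case MInf
    show ?thesis
    proof (cases "\<exists>y. P n y")
      case True
      then obtain y where "P n y" by blast
      from key[OF this] MInf have "c = -\<infinity>" by simp
      then show ?thesis by simp
    next
      case False
      then have "I = \<infinity>" unfolding I_def by (simp add: top_ereal_def[symmetric])
      then show ?thesis using MInf by simp
    qed
  next
    case (real a)
    have "c - ereal a \<le> I" unfolding I_def
    proof (rule Inf_greatest, safe)
      fix y assume "P n y"
      from key[OF this] real show "c - ereal a \<le> ereal y" by (cases c) auto
    qed
    then show ?thesis using real by (cases c; cases I) auto
  qed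
  then show ?case by (simp add: A_def I_def)
qed

lemma Lbar_bdd:
  fixes L :: "nat \<Rightarrow> real \<Rightarrow> real" and n :: nat
  assumes L: "\<forall>i<n. H_I (L i)"
  shows "bdd_above {(\<Sum>i<n. L i (y i)) | y. (\<Sum>i<n. y i) = x}"
proof (rule bdd_aboveI[of _ "real n"], safe)
  fix y :: "nat \<Rightarrow> real"
  have "(\<Sum>i<n. L i (y i)) \<le> (\<Sum>i<n. 1)"
    using L by (intro sum_mono) (auto simp: H_I_def less_imp_le)
  then show "(\<Sum>i<n. L i (y i)) \<le> real n" by simp
qed

lemma Lbar_upper:
  fixes L :: "nat \<Rightarrow> real \<Rightarrow> real" and n :: nat
  assumes L: "\<forall>i<n. H_I (L i)" and "(\<Sum>i<n. y i) = x"
  shows "(\<Sum>i<n. L i (y i)) \<le> Lbar n L x"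
  unfolding Lbar_def by (rule cSup_upper[OF _ Lbar_bdd[OF L]]) (use assms(2) in blast)

lemma Lbar_mono:
  fixes L :: "nat \<Rightarrow> real \<Rightarrow> real" and n :: nat
  assumes L: "\<forall>i<n. H_I (L i)" and n: "1 \<le> n" and xx: "x' \<le> x"
  shows "Lbar n L x' \<le> Lbar n L x"
  unfolding Lbar_def[of n L x']
proof (rule cSup_least)
  define y0 where "y0 = (\<lambda>i::nat. if i = 0 then x' else 0)"
  have "(\<Sum>i<n. y0 i) = x'" using n by (simp add: y0_def sum.If_cases lessThan_def)
  then show "{(\<Sum>i<n. L i (y i)) | y. (\<Sum>i<n. y i) = x'} \<noteq> {}" by blast
next
  fix v assume "v \<in> {(\<Sum>i<n. L i (y i)) | y. (\<Sum>i<n. y i) = x'}"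
  then obtain y where y: "(\<Sum>i<n. y i) = x'" "v = (\<Sum>i<n. L i (y i))" by blast
  define y' where "y' = y(0 := y 0 + (x - x'))"
  have "(\<Sum>i<n. y' i) = (\<Sum>i<n. y i) + (x - x')"
  proof -
    have "0 \<in> {..<n}" using n by simp
    then show ?thesis unfolding y'_def by (simp add: sum.remove[of "{..<n}" 0] )
  qed
  then have s: "(\<Sum>i<n. y' i) = x" using y by simp
  have "v \<le> (\<Sum>i<n. L i (y' i))" unfolding y(2)
  proof (rule sum_mono)
    fix i assume "i \<in> {..<n}"
    then have "mono (L i)" using L by (simp add: H_I_def)
    then show "L i (y i) \<le> L i (y' i)" using xx by (auto simp: y'_def mono_def)
  qed
  also have "\<dots> \<le> Lbar n L x" by (rule Lbar_upper[OF L s])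
  finally show "v \<le> Lbar n L x" .
qed

lemma partition_space:
  fixes Y X :: "'a \<Rightarrow> real" and t :: "nat \<Rightarrow> real"
  assumes P: "prob_space M" and al: "atomless M" and Ym[measurable]: "Y \<in> borel_measurable M"
    and Y0: "\<forall>\<omega>\<in>space M. 0 \<le> Y \<omega>" and Yi: "integrable M Y"
    and Xm[measurable]: "X \<in> borel_measurable M" and n: "1 \<le> n" and t0: "\<forall>i<n. 0 \<le> t i"
    and le: "integral\<^sup>L M (\<lambda>\<omega>. Y \<omega> * indicator {\<omega>\<in>space M. x < X \<omega>} \<omega>) \<le> (\<Sum>i<n. t i)"
  shows "\<exists>A. (\<forall>i<n. A i \<in> sets M) \<and> disjoint_family_on A {..<n} \<and> (\<Union>i<n. A i) = space M
     \<and> (\<forall>i<n. integral\<^sup>L M (\<lambda>\<omega>. Y \<omega> * indicator ({\<omega>\<in>space M. x < X \<omega>} \<inter> A i) \<omega>) \<le> t i)"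
proof -
  let ?N = "density M (\<lambda>\<omega>. ennreal (Y \<omega>))"
  interpret N: finite_measure ?N by (rule density_finite[OF Ym Y0 Yi])
  have alN: "atomless ?N" by (rule density_atomless[OF P al Ym Y0 Yi])
  have mN: "measure ?N B = integral\<^sup>L M (\<lambda>\<omega>. Y \<omega> * indicator B \<omega>)" if "B \<in> sets M" for B
    by (rule measure_density_int[OF Ym Y0 Yi that])
  obtain m where m: "n = Suc m" using n by (cases n) auto
  define S where "S = {\<omega>\<in>space M. x < X \<omega>}"
  have Ss: "S \<in> sets M" unfolding S_def by measurable
  have c3: "measure ?N S \<le> (\<Sum>i<Suc m. t i)" using le mN[OF Ss] m by (simp add: S_def)
  have c1: "S \<in> sets ?N" using Ss by simp
  have c2: "\<forall>i<Suc m. 0 \<le> t i" using t0 m by simp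
  obtain A where A: "\<forall>i<Suc m. A i \<in> sets ?N \<and> A i \<subseteq> S \<and> measure ?N (A i) \<le> t i"
    "disjoint_family_on A {..<Suc m}" "(\<Union>i<Suc m. A i) = S"
    using N.partition_measure[OF alN c1 c2 c3] by metis
  define A' where "A' = A(0 := A 0 \<union> (space M - S))"
  have SM: "S \<subseteq> space M" by (auto simp: S_def)
  have A'1: "\<forall>i<n. A' i \<in> sets M" using A(1) Ss m by (auto simp: A'_def)
  have A'2: "disjoint_family_on A' {..<n}"
    unfolding disjoint_family_on_def
  proof (intro ballI impI)
    fix i j assume i: "i \<in> {..<n}" and j: "j \<in> {..<n}" and ij: "i \<noteq> j"
    have Ai: "A i \<subseteq> S" "A j \<subseteq> S" using A(1) i j m by auto
    have d: "A i \<inter> A j = {}" using A(2) i j ij m by (auto simp: disjoint_family_on_def)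
    show "A' i \<inter> A' j = {}"
      using Ai d ij by (cases "i = 0"; cases "j = 0") (auto simp: A'_def)
  qed
  have A'3: "(\<Union>i<n. A' i) = space M"
  proof
    show "(\<Union>i<n. A' i) \<subseteq> space M"
      using A(1) SM m by (auto simp: A'_def split: if_splits)
    show "space M \<subseteq> (\<Union>i<n. A' i)"
    proof
      fix \<omega> assume \<omega>: "\<omega> \<in> space M"
      show "\<omega> \<in> (\<Union>i<n. A' i)"
      proof (cases "\<omega> \<in> S")
        case True
        then obtain i where "i < n" "\<omega> \<in> A i" using A(3) m by auto
        then show ?thesis by (cases "i = 0") (auto simp: A'_def)
      next
        case False
        then have "\<omega> \<in> A' 0" using \<omega> by (simp add: A'_def)
        then show ?thesis using n by auto
      qed
    qed
  qed
  have A'4: "\<forall>i<n. integral\<^sup>L M (\<lambda>\<omega>. Y \<omega> * indicator ({\<omega>\<in>space M. x < X \<omega>} \<inter> A' i) \<omega>) \<le> t i"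
  proof (intro allI impI)
    fix i assume i: "i < n"
    have "S \<inter> A' i = A i" using A(1) i m by (auto simp: A'_def)
    then have "integral\<^sup>L M (\<lambda>\<omega>. Y \<omega> * indicator ({\<omega>\<in>space M. x < X \<omega>} \<inter> A' i) \<omega>) = measure ?N (A i)"
      using mN[of "A i"] A(1) i m by (simp add: S_def)
    then show "integral\<^sup>L M (\<lambda>\<omega>. Y \<omega> * indicator ({\<omega>\<in>space M. x < X \<omega>} \<inter> A' i) \<omega>) \<le> t i"
      using A(1) i m by simp
  qed
  show ?thesis using A'1 A'2 A'3 A'4 by blast
qed

lemma alloc_Z:
  fixes Y X :: "'a \<Rightarrow> real" and ys :: "nat \<Rightarrow> real" and L :: "nat \<Rightarrow> real \<Rightarrow> real"
  assumes P: "prob_space M" and Ym[measurable]: "Y \<in> borel_measurable M"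
    and Y0: "\<forall>\<omega>\<in>space M. 0 \<le> Y \<omega>" and Yi: "integrable M Y" and Y1: "1 < integral\<^sup>L M Y"
    and HL: "\<forall>i<n. H_I (L i)"
    and XXm: "XX \<subseteq> borel_measurable M"
    and c0: "\<forall>c::real. (\<lambda>_. c) \<in> XX"
    and cl: "\<forall>X\<in>XX. \<forall>Z\<in>XX. (\<lambda>\<omega>. X \<omega> + Z \<omega>) \<in> XX \<and> (\<lambda>\<omega>. X \<omega> - Z \<omega>) \<in> XX"
    and ind: "\<forall>X\<in>XX. \<forall>A\<in>sets M. (\<lambda>\<omega>. X \<omega> * indicator A \<omega>) \<in> XX"
    and X: "X \<in> XX"
    and sy: "(\<Sum>i<n. ys i) = x" and As: "\<forall>i<n. A i \<in> sets M" and dj: "disjoint_family_on A {..<n}"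
    and cov: "(\<Union>i<n. A i) = space M"
    and Ai: "\<forall>i<n. integral\<^sup>L M (\<lambda>\<omega>. Y \<omega> * indicator ({\<omega>\<in>space M. x < X \<omega>} \<inter> A i) \<omega>) \<le> L i (ys i)"
  shows "(\<forall>i<n. (\<lambda>\<omega>. (X \<omega> - x) * indicator (A i) \<omega> + ys i) \<in> XX)
    \<and> (\<forall>\<omega>\<in>space M. (\<Sum>i<n. (X \<omega> - x) * indicator (A i) \<omega> + ys i) = X \<omega>)
    \<and> (\<Sum>i<n. robustLVaR M Y (L i) (\<lambda>\<omega>. (X \<omega> - x) * indicator (A i) \<omega> + ys i)) \<le> ereal x"
proof -
  define Z where "Z i \<omega> = (X \<omega> - x) * indicator (A i) \<omega> + ys i" for i \<omega>
  have cc: "(\<lambda>_. c) \<in> XX" for c using c0 by blast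
  have h1': "(\<lambda>\<omega>. X \<omega> - x) \<in> XX" using bspec[OF bspec[OF cl X] cc[of x]] by simp
  have ZX: "Z i \<in> XX" if i: "i < n" for i
  proof -
    have Ais: "A i \<in> sets M" using As i by blast
    have h2: "(\<lambda>\<omega>. (X \<omega> - x) * indicator (A i) \<omega>) \<in> XX" using bspec[OF bspec[OF ind h1'] Ais] by simp
    have "(\<lambda>\<omega>. (X \<omega> - x) * indicator (A i) \<omega> + ys i) \<in> XX" using bspec[OF bspec[OF cl h2] cc[of "ys i"]] by simp
    then show ?thesis by (simp add: Z_def[abs_def])
  qed
  have Zsum: "(\<Sum>i<n. Z i \<omega>) = X \<omega>" if \<omega>: "\<omega> \<in> space M" for \<omega>
  proof -
    obtain j where j: "j < n" "\<omega> \<in> A j" using cov \<omega> by blast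
    have "(\<Sum>i<n. Z i \<omega>) = (\<Sum>i\<in>{..<n}. (X \<omega> - x) * indicator (A i) \<omega>) + (\<Sum>i<n. ys i)"
      by (simp add: Z_def sum.distrib)
    also have "(\<Sum>i\<in>{..<n}. (X \<omega> - x) * indicator (A i) \<omega>) = X \<omega> - x"
      using sum_indicator_disjoint_family[OF dj, of \<omega> j "\<lambda>_. X \<omega> - x"] j by simp
    finally show ?thesis using sy by simp
  qed
  have Zr: "robustLVaR M Y (L i) (Z i) \<le> ereal (ys i)" if i: "i < n" for i
  proof -
    have Zm: "Z i \<in> borel_measurable M" using ZX[OF i] XXm by blast
    have seteq: "{\<omega>\<in>space M. ys i < Z i \<omega>} = {\<omega>\<in>space M. x < X \<omega>} \<inter> A i"
      by (auto simp: Z_def split: split_indicator)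
    have "robustLVaR M Y (L i) (Z i) = Inf {ereal y | y. integral\<^sup>L M (\<lambda>\<omega>. Y \<omega> * indicator {\<omega>\<in>space M. y < Z i \<omega>} \<omega>) \<le> L i y}"
      using HL i by (intro robust_eq[OF P Ym Y0 Yi Y1 _ Zm]) auto
    also have "\<dots> \<le> ereal (ys i)"
      by (rule Inf_lower) (use Ai i seteq in auto)
    finally show ?thesis .
  qed
  have "(\<Sum>i<n. robustLVaR M Y (L i) (Z i)) \<le> (\<Sum>i<n. ereal (ys i))"
    by (rule sum_mono) (use Zr in auto)
  also have "\<dots> = ereal x" using sy by simp
  finally have "(\<Sum>i<n. robustLVaR M Y (L i) (Z i)) \<le> ereal x" .
  then show ?thesis using ZX Zsum unfolding Z_def by blast
qed

lemma lower_bound: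
  fixes Y X :: "'a \<Rightarrow> real" and Z :: "nat \<Rightarrow> 'a \<Rightarrow> real" and L :: "nat \<Rightarrow> real \<Rightarrow> real"
  assumes P: "prob_space M" and Ym[measurable]: "Y \<in> borel_measurable M"
    and Y0: "\<forall>\<omega>\<in>space M. 0 \<le> Y \<omega>" and Yi: "integrable M Y" and Y1: "1 < integral\<^sup>L M Y"
    and HL: "\<forall>i<n. H_I (L i)"
    and Zm: "\<forall>i<n. Z i \<in> borel_measurable M" and Xm[measurable]: "X \<in> borel_measurable M"
    and sum: "\<forall>\<omega>\<in>space M. (\<Sum>i<n. Z i \<omega>) = X \<omega>"
  shows "Inf {ereal x | x. integral\<^sup>L M (\<lambda>\<omega>. Y \<omega> * indicator {\<omega>\<in>space M. x < X \<omega>} \<omega>) \<le> Lbar n L x}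
     \<le> (\<Sum>i<n. robustLVaR M Y (L i) (Z i))"
proof -
  let ?N = "density M (\<lambda>\<omega>. ennreal (Y \<omega>))"
  interpret N: finite_measure ?N by (rule density_finite[OF Ym Y0 Yi])
  have mN: "measure ?N B = integral\<^sup>L M (\<lambda>\<omega>. Y \<omega> * indicator B \<omega>)" if "B \<in> sets M" for B
    by (rule measure_density_int[OF Ym Y0 Yi that])
  have req: "(\<Sum>i<n. robustLVaR M Y (L i) (Z i)) = (\<Sum>i<n. Inf {ereal y | y. integral\<^sup>L M (\<lambda>\<omega>. Y \<omega> * indicator {\<omega>\<in>space M. y < Z i \<omega>} \<omega>) \<le> L i y})"
  proof (rule sum.cong[OF refl])
    fix i assume "i \<in> {..<n}"
    then show "robustLVaR M Y (L i) (Z i) = Inf {ereal y | y. integral\<^sup>L M (\<lambda>\<omega>. Y \<omega> * indicator {\<omega>\<in>space M. y < Z i \<omega>} \<omega>) \<le> L i y}"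
      using HL Zm by (intro robust_eq[OF P Ym Y0 Yi Y1]) auto
  qed
  show ?thesis unfolding req
  proof (rule sum_Inf_bound)
    fix xv :: "nat \<Rightarrow> real"
    assume xv: "\<forall>i<n. integral\<^sup>L M (\<lambda>\<omega>. Y \<omega> * indicator {\<omega>\<in>space M. xv i < Z i \<omega>} \<omega>) \<le> L i (xv i)"
    define s where "s = (\<Sum>i<n. xv i)"
    define B where "B i = {\<omega>\<in>space M. xv i < Z i \<omega>}" for i
    have Bs: "B i \<in> sets M" if "i < n" for i
    proof -
      have [measurable]: "Z i \<in> borel_measurable M" using Zm that by blast
      show ?thesis unfolding B_def by measurable
    qed
    have Ss: "{\<omega>\<in>space M. s < X \<omega>} \<in> sets M" by measurable
    have sub: "{\<omega>\<in>space M. s < X \<omega>} \<subseteq> (\<Union>i\<in>{..<n}. B i)"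
    proof
      fix \<omega> assume \<omega>: "\<omega> \<in> {\<omega>\<in>space M. s < X \<omega>}"
      show "\<omega> \<in> (\<Union>i\<in>{..<n}. B i)"
      proof (rule ccontr)
        assume "\<omega> \<notin> (\<Union>i\<in>{..<n}. B i)"
        then have "\<forall>i<n. Z i \<omega> \<le> xv i" using \<omega> by (auto simp: B_def not_less)
        then have "(\<Sum>i<n. Z i \<omega>) \<le> s" unfolding s_def by (intro sum_mono) auto
        then show False using \<omega> sum by auto
      qed
    qed
    have "integral\<^sup>L M (\<lambda>\<omega>. Y \<omega> * indicator {\<omega>\<in>space M. s < X \<omega>} \<omega>) = measure ?N {\<omega>\<in>space M. s < X \<omega>}"
      using mN[OF Ss] by simp
    also have "\<dots> \<le> measure ?N (\<Union>i\<in>{..<n}. B i)"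
      using sub Bs by (intro N.finite_measure_mono) auto
    also have "\<dots> \<le> (\<Sum>i<n. measure ?N (B i))"
      using Bs by (intro N.finite_measure_subadditive_finite) auto
    also have "\<dots> = (\<Sum>i<n. integral\<^sup>L M (\<lambda>\<omega>. Y \<omega> * indicator (B i) \<omega>))"
      using Bs mN by (intro sum.cong) auto
    also have "\<dots> \<le> (\<Sum>i<n. L i (xv i))"
      using xv by (intro sum_mono) (auto simp: B_def)
    also have "\<dots> \<le> Lbar n L s" using Lbar_upper[OF HL] s_def by blast
    finally have "ereal s \<in> {ereal x | x. integral\<^sup>L M (\<lambda>\<omega>. Y \<omega> * indicator {\<omega>\<in>space M. x < X \<omega>} \<omega>) \<le> Lbar n L x}"
      by blast
    then show "Inf {ereal x | x. integral\<^sup>L M (\<lambda>\<omega>. Y \<omega> * indicator {\<omega>\<in>space M. x < X \<omega>} \<omega>) \<le> Lbar n L x} \<le> ereal (\<Sum>i<n. xv i)"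
      unfolding s_def by (rule Inf_lower)
  qed
qed

theorem mainTheorem16:
  fixes M :: "'a measure" and XX :: "('a \<Rightarrow> real) set"
    and L :: "nat \<Rightarrow> real \<Rightarrow> real" and n :: nat and Y :: "'a \<Rightarrow> real"
  assumes "prob_space M" and "atomless M" and "n \<ge> 1"
    and "\<forall>i<n. H_I (L i)"
    and "Y \<in> borel_measurable M" and "\<forall>\<omega>\<in>space M. 0 \<le> Y \<omega>"
    and "integrable M Y" and "1 < integral\<^sup>L M Y"
    and "XX \<subseteq> borel_measurable M"
    and "\<forall>c::real. (\<lambda>_. c) \<in> XX"
    and "\<forall>X\<in>XX. \<forall>Z\<in>XX. (\<lambda>\<omega>. X \<omega> + Z \<omega>) \<in> XX \<and> (\<lambda>\<omega>. X \<omega> - Z \<omega>) \<in> XX"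
    and "\<forall>X\<in>XX. \<forall>A\<in>sets M. (\<lambda>\<omega>. X \<omega> * indicator A \<omega>) \<in> XX"
    and "attainable n L"
  shows "(\<forall>X\<in>XX. infconv M XX n (\<lambda>i. robustLVaR M Y (L i)) X
           = Inf {ereal x | x. integral\<^sup>L M (\<lambda>\<omega>. Y \<omega> * indicator {\<omega>\<in>space M. X \<omega> > x} \<omega>)
                                 \<le> Lbar n L x})
    \<and> (\<forall>X\<in>XX. \<forall>xs::real.
           Inf {ereal x | x. integral\<^sup>L M (\<lambda>\<omega>. Y \<omega> * indicator {\<omega>\<in>space M. X \<omega> > x} \<omega>)
                                 \<le> Lbar n L x} = ereal xs
           \<and> continuous (at_right xs) (Lbar n L)
         \<longrightarrow> (\<exists>ys A. (\<Sum>i<n. ys i) = xs \<and> (\<Sum>i<n. L i (ys i)) = Lbar n L xs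
                    \<and> (\<forall>i<n. A i \<in> sets M) \<and> disjoint_family_on A {..<n}
                    \<and> (\<Union>i<n. A i) = space M
                    \<and> (\<forall>i<n. integral\<^sup>L M (\<lambda>\<omega>. Y \<omega> * indicator ({\<omega>\<in>space M. X \<omega> > xs} \<inter> A i) \<omega>)
                              \<le> L i (ys i)))
           \<and> (\<forall>ys A. (\<Sum>i<n. ys i) = xs \<and> (\<Sum>i<n. L i (ys i)) = Lbar n L xs
                    \<and> (\<forall>i<n. A i \<in> sets M) \<and> disjoint_family_on A {..<n}
                    \<and> (\<Union>i<n. A i) = space M
                    \<and> (\<forall>i<n. integral\<^sup>L M (\<lambda>\<omega>. Y \<omega> * indicator ({\<omega>\<in>space M. X \<omega> > xs} \<inter> A i) \<omega>)
                              \<le> L i (ys i))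
                \<longrightarrow> (let Z = (\<lambda>i \<omega>. (X \<omega> - xs) * indicator (A i) \<omega> + ys i) in
                      (\<forall>i<n. Z i \<in> XX) \<and> (\<forall>\<omega>\<in>space M. (\<Sum>i<n. Z i \<omega>) = X \<omega>)
                      \<and> (\<Sum>i<n. robustLVaR M Y (L i) (Z i))
                          = infconv M XX n (\<lambda>i. robustLVaR M Y (L i)) X)))"
proof -
  note P = assms(1) and al = assms(2) and n = assms(3) and HL = assms(4)
    and Ym = assms(5) and Y0 = assms(6) and Yi = assms(7) and Y1 = assms(8)
    and XXm = assms(9) and c0 = assms(10) and cl = assms(11) and ind = assms(12) and att = assms(13)
  note [measurable] = Ym
  define R where "R X = Inf {ereal x | x. integral\<^sup>L M (\<lambda>\<omega>. Y \<omega> * indicator {\<omega>\<in>space M. X \<omega> > x} \<omega>)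
                                 \<le> Lbar n L x}" for X
  have t0: "\<forall>i<n. 0 \<le> L i (ys i)" for ys using HL by (auto simp: H_I_def less_imp_le)
  have part1: "infconv M XX n (\<lambda>i. robustLVaR M Y (L i)) X = R X" if X: "X \<in> XX" for X
  proof -
    have Xm[measurable]: "X \<in> borel_measurable M" using X XXm by blast
    show ?thesis
    proof (rule antisym)
      show "infconv M XX n (\<lambda>i. robustLVaR M Y (L i)) X \<le> R X" unfolding R_def
      proof (rule Inf_greatest, safe)
        fix x assume x: "integral\<^sup>L M (\<lambda>\<omega>. Y \<omega> * indicator {\<omega>\<in>space M. X \<omega> > x} \<omega>) \<le> Lbar n L x"
        from att obtain ys where ys: "(\<Sum>i<n. ys i) = x" "(\<Sum>i<n. L i (ys i)) = Lbar n L x"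
          unfolding attainable_def by blast
        have le: "integral\<^sup>L M (\<lambda>\<omega>. Y \<omega> * indicator {\<omega>\<in>space M. x < X \<omega>} \<omega>) \<le> (\<Sum>i<n. L i (ys i))"
          using x ys(2) by simp
        obtain A where A: "\<forall>i<n. A i \<in> sets M" "disjoint_family_on A {..<n}" "(\<Union>i<n. A i) = space M"
          "\<forall>i<n. integral\<^sup>L M (\<lambda>\<omega>. Y \<omega> * indicator ({\<omega>\<in>space M. x < X \<omega>} \<inter> A i) \<omega>) \<le> L i (ys i)"
          using partition_space[OF P al Ym Y0 Yi Xm n t0 le] by blast
        note Z = alloc_Z[OF P Ym Y0 Yi Y1 HL XXm c0 cl ind X ys(1) A]
        have "infconv M XX n (\<lambda>i. robustLVaR M Y (L i)) X
            \<le> (\<Sum>i<n. robustLVaR M Y (L i) (\<lambda>\<omega>. (X \<omega> - x) * indicator (A i) \<omega> + ys i))"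
          unfolding infconv_def
          apply (rule Inf_lower, rule CollectI)
          apply (rule exI[of _ "\<lambda>i \<omega>. (X \<omega> - x) * indicator (A i) \<omega> + ys i"])
          apply (intro conjI refl)
          apply (rule conjunct1[OF Z])
          apply (rule conjunct1[OF conjunct2[OF Z]])
          done
        also have "\<dots> \<le> ereal x" using Z by blast
        finally show "infconv M XX n (\<lambda>i. robustLVaR M Y (L i)) X \<le> ereal x" .
      qed
      show "R X \<le> infconv M XX n (\<lambda>i. robustLVaR M Y (L i)) X" unfolding infconv_def
      proof (rule Inf_greatest, safe)
        fix Z assume Z: "\<forall>i<n. Z i \<in> XX" "\<forall>\<omega>\<in>space M. (\<Sum>i<n. Z i \<omega>) = X \<omega>"
        have Zm: "\<forall>i<n. Z i \<in> borel_measurable M" using Z(1) XXm by blast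
        show "R X \<le> (\<Sum>i<n. robustLVaR M Y (L i) (Z i))"
          unfolding R_def using lower_bound[OF P Ym Y0 Yi Y1 HL Zm Xm Z(2)] by simp
      qed
    qed
  qed
  have part2: "(\<exists>ys A. (\<Sum>i<n. ys i) = xs \<and> (\<Sum>i<n. L i (ys i)) = Lbar n L xs
                    \<and> (\<forall>i<n. A i \<in> sets M) \<and> disjoint_family_on A {..<n}
                    \<and> (\<Union>i<n. A i) = space M
                    \<and> (\<forall>i<n. integral\<^sup>L M (\<lambda>\<omega>. Y \<omega> * indicator ({\<omega>\<in>space M. X \<omega> > xs} \<inter> A i) \<omega>)
                              \<le> L i (ys i)))
           \<and> (\<forall>ys A. (\<Sum>i<n. ys i) = xs \<and> (\<Sum>i<n. L i (ys i)) = Lbar n L xs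
                    \<and> (\<forall>i<n. A i \<in> sets M) \<and> disjoint_family_on A {..<n}
                    \<and> (\<Union>i<n. A i) = space M
                    \<and> (\<forall>i<n. integral\<^sup>L M (\<lambda>\<omega>. Y \<omega> * indicator ({\<omega>\<in>space M. X \<omega> > xs} \<inter> A i) \<omega>)
                              \<le> L i (ys i))
                \<longrightarrow> (let Z = (\<lambda>i \<omega>. (X \<omega> - xs) * indicator (A i) \<omega> + ys i) in
                      (\<forall>i<n. Z i \<in> XX) \<and> (\<forall>\<omega>\<in>space M. (\<Sum>i<n. Z i \<omega>) = X \<omega>)
                      \<and> (\<Sum>i<n. robustLVaR M Y (L i) (Z i))
                          = infconv M XX n (\<lambda>i. robustLVaR M Y (L i)) X))"
    if X: "X \<in> XX" and RX: "R X = ereal xs" and cont: "continuous (at_right xs) (Lbar n L)" for X xs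
  proof -
    have Xm[measurable]: "X \<in> borel_measurable M" using X XXm by blast
    define sv where "sv x = integral\<^sup>L M (\<lambda>\<omega>. Y \<omega> * indicator {\<omega>\<in>space M. x < X \<omega>} \<omega>)" for x
    have gt: "sv x \<le> Lbar n L x" if xx: "xs < x" for x
    proof -
      have "R X < ereal x" using RX xx by simp
      then obtain e where e: "e \<in> {ereal x | x. integral\<^sup>L M (\<lambda>\<omega>. Y \<omega> * indicator {\<omega>\<in>space M. X \<omega> > x} \<omega>)
                                 \<le> Lbar n L x}" "e < ereal x"
        unfolding R_def Inf_less_iff by blast
      from e(1) obtain x' where x'1: "e = ereal x'"
        and x'2: "integral\<^sup>L M (\<lambda>\<omega>. Y \<omega> * indicator {\<omega>\<in>space M. X \<omega> > x'} \<omega>) \<le> Lbar n L x'"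
        by blast
      have x': "sv x' \<le> Lbar n L x'" using x'2 unfolding sv_def .
      have x'x: "x' < x" using e(2) x'1 by simp
      have "sv x \<le> sv x'" unfolding sv_def
      proof (rule integral_mono)
        show "integrable M (\<lambda>\<omega>. Y \<omega> * indicator {\<omega>\<in>space M. x < X \<omega>} \<omega>)"
          by (rule integrable_real_mult_indicator[OF _ Yi]) measurable
        show "integrable M (\<lambda>\<omega>. Y \<omega> * indicator {\<omega>\<in>space M. x' < X \<omega>} \<omega>)"
          by (rule integrable_real_mult_indicator[OF _ Yi]) measurable
        fix \<omega> assume \<omega>: "\<omega> \<in> space M"
        have y0: "0 \<le> Y \<omega>" using Y0 \<omega> by blast
        show "Y \<omega> * indicator {\<omega>\<in>space M. x < X \<omega>} \<omega> \<le> Y \<omega> * indicator {\<omega>\<in>space M. x' < X \<omega>} \<omega>"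
        proof (cases "x < X \<omega>")
          case True
          then have "x' < X \<omega>" using x'x by linarith
          then show ?thesis using True \<omega> by simp
        next
          case False
          then show ?thesis using y0 \<omega> by (simp add: indicator_def)
        qed
      qed
      also have "\<dots> \<le> Lbar n L x'" by (rule x')
      also have "\<dots> \<le> Lbar n L x" using Lbar_mono[OF HL n] x'x by simp
      finally show ?thesis .
    qed
    define u where "u k = xs + 1 / real (Suc k)" for k
    have uxs: "xs < u k" for k by (simp add: u_def)
    have ulim: "u \<longlonglongrightarrow> xs"
    proof -
      have "(\<lambda>k. xs + 1 / real (Suc k)) \<longlonglongrightarrow> xs + 0"
        by (intro tendsto_add tendsto_const LIMSEQ_Suc[OF lim_1_over_n])
      moreover have "u = (\<lambda>k. xs + 1 / real (Suc k))" by (rule ext) (simp add: u_def)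
      ultimately show ?thesis by simp
    qed
    let ?N = "density M (\<lambda>\<omega>. ennreal (Y \<omega>))"
    interpret N: finite_measure ?N by (rule density_finite[OF Ym Y0 Yi])
    have mN: "measure ?N B = integral\<^sup>L M (\<lambda>\<omega>. Y \<omega> * indicator B \<omega>)" if "B \<in> sets M" for B
      by (rule measure_density_int[OF Ym Y0 Yi that])
    define B where "B k = {\<omega>\<in>space M. u k < X \<omega>}" for k
    have Bs: "B k \<in> sets M" for k unfolding B_def by measurable
    have Binc: "incseq B"
    proof (rule incseq_SucI)
      fix k
      have "u (Suc k) \<le> u k" unfolding u_def by (simp add: frac_le)
      then show "B k \<subseteq> B (Suc k)" by (auto simp: B_def)
    qed
    have Bun: "(\<Union>k. B k) = {\<omega>\<in>space M. xs < X \<omega>}"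
    proof
      show "(\<Union>k. B k) \<subseteq> {\<omega>\<in>space M. xs < X \<omega>}" using uxs by (auto simp: B_def intro: less_trans)
      show "{\<omega>\<in>space M. xs < X \<omega>} \<subseteq> (\<Union>k. B k)"
      proof
        fix \<omega> assume \<omega>: "\<omega> \<in> {\<omega>\<in>space M. xs < X \<omega>}"
        then have "0 < X \<omega> - xs" by simp
        from ex_inverse_of_nat_less[OF this] obtain m :: nat where m: "0 < m" "inverse (real m) < X \<omega> - xs"
          by blast
        then have "u (m - 1) < X \<omega>" by (simp add: u_def inverse_eq_divide)
        then show "\<omega> \<in> (\<Union>k. B k)" using \<omega> by (auto simp: B_def)
      qed
    qed
    have lim1: "(\<lambda>k. sv (u k)) \<longlonglongrightarrow> sv xs"
    proof -
      have "(\<lambda>k. measure ?N (B k)) \<longlonglongrightarrow> measure ?N (\<Union>k. B k)"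
        using Bs Binc by (intro N.finite_Lim_measure_incseq) auto
      moreover have "measure ?N (B k) = sv (u k)" for k using mN[OF Bs] by (simp add: sv_def B_def)
      moreover have "measure ?N (\<Union>k. B k) = sv xs"
      proof -
        have "{\<omega>\<in>space M. xs < X \<omega>} \<in> sets M" by measurable
        then show ?thesis unfolding Bun using mN by (simp add: sv_def)
      qed
      ultimately show ?thesis by simp
    qed
    have lim2: "(\<lambda>k. Lbar n L (u k)) \<longlonglongrightarrow> Lbar n L xs"
    proof -
      have c: "(Lbar n L \<longlongrightarrow> Lbar n L xs) (at_right xs)" using cont by (simp add: continuous_within)
      have f: "filterlim u (at_right xs) sequentially"
        by (rule tendsto_imp_filterlim_at_right[OF ulim]) (simp add: uxs)
      show ?thesis using filterlim_compose[OF c f] .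
    qed
    have svle: "sv xs \<le> Lbar n L xs"
      by (rule LIMSEQ_le[OF lim1 lim2]) (use gt uxs in auto)
    show ?thesis
    proof (intro conjI allI impI)
      from att obtain ys where ys: "(\<Sum>i<n. ys i) = xs" "(\<Sum>i<n. L i (ys i)) = Lbar n L xs"
        unfolding attainable_def by blast
      have le: "integral\<^sup>L M (\<lambda>\<omega>. Y \<omega> * indicator {\<omega>\<in>space M. xs < X \<omega>} \<omega>) \<le> (\<Sum>i<n. L i (ys i))"
        using svle ys(2) by (simp add: sv_def)
      obtain A where A: "\<forall>i<n. A i \<in> sets M" "disjoint_family_on A {..<n}" "(\<Union>i<n. A i) = space M"
          "\<forall>i<n. integral\<^sup>L M (\<lambda>\<omega>. Y \<omega> * indicator ({\<omega>\<in>space M. xs < X \<omega>} \<inter> A i) \<omega>) \<le> L i (ys i)"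
        using partition_space[OF P al Ym Y0 Yi Xm n t0 le] by blast
      show "\<exists>ys A. (\<Sum>i<n. ys i) = xs \<and> (\<Sum>i<n. L i (ys i)) = Lbar n L xs
                    \<and> (\<forall>i<n. A i \<in> sets M) \<and> disjoint_family_on A {..<n}
                    \<and> (\<Union>i<n. A i) = space M
                    \<and> (\<forall>i<n. integral\<^sup>L M (\<lambda>\<omega>. Y \<omega> * indicator ({\<omega>\<in>space M. X \<omega> > xs} \<inter> A i) \<omega>)
                              \<le> L i (ys i))"
        apply (rule exI[of _ ys], rule exI[of _ A])
        apply (intro conjI)
        apply (rule ys(1))
        apply (rule ys(2))
        apply (rule A(1))
        apply (rule A(2))
        apply (rule A(3))
        apply (rule A(4))
        done
    next
      fix ys A
      assume H: "(\<Sum>i<n. ys i) = xs \<and> (\<Sum>i<n. L i (ys i)) = Lbar n L xs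
                    \<and> (\<forall>i<n. A i \<in> sets M) \<and> disjoint_family_on A {..<n}
                    \<and> (\<Union>i<n. A i) = space M
                    \<and> (\<forall>i<n. integral\<^sup>L M (\<lambda>\<omega>. Y \<omega> * indicator ({\<omega>\<in>space M. X \<omega> > xs} \<inter> A i) \<omega>)
                              \<le> L i (ys i))"
      then have H1: "(\<Sum>i<n. ys i) = xs" and H2: "\<forall>i<n. A i \<in> sets M" and H3: "disjoint_family_on A {..<n}"
        and H4: "(\<Union>i<n. A i) = space M"
        and H5: "\<forall>i<n. integral\<^sup>L M (\<lambda>\<omega>. Y \<omega> * indicator ({\<omega>\<in>space M. xs < X \<omega>} \<inter> A i) \<omega>) \<le> L i (ys i)"
        by (blast, blast, blast, blast, blast)
      note Z = alloc_Z[OF P Ym Y0 Yi Y1 HL XXm c0 cl ind X H1 H2 H3 H4 H5]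
      have i1: "infconv M XX n (\<lambda>i. robustLVaR M Y (L i)) X
            \<le> (\<Sum>i<n. robustLVaR M Y (L i) (\<lambda>\<omega>. (X \<omega> - xs) * indicator (A i) \<omega> + ys i))"
        unfolding infconv_def
        apply (rule Inf_lower, rule CollectI)
        apply (rule exI[of _ "\<lambda>i \<omega>. (X \<omega> - xs) * indicator (A i) \<omega> + ys i"])
        apply (intro conjI refl)
        apply (rule conjunct1[OF Z])
        apply (rule conjunct1[OF conjunct2[OF Z]])
        done
      have i2: "infconv M XX n (\<lambda>i. robustLVaR M Y (L i)) X = ereal xs" using part1[OF X] RX by simp
      have "(\<Sum>i<n. robustLVaR M Y (L i) (\<lambda>\<omega>. (X \<omega> - xs) * indicator (A i) \<omega> + ys i))
          = infconv M XX n (\<lambda>i. robustLVaR M Y (L i)) X" (is "?lhs = _")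
        using i1 i2 conjunct2[OF conjunct2[OF Z]] by (intro antisym) simp_all
      note eqZ = this
      show "let Z = (\<lambda>i \<omega>. (X \<omega> - xs) * indicator (A i) \<omega> + ys i) in
                      (\<forall>i<n. Z i \<in> XX) \<and> (\<forall>\<omega>\<in>space M. (\<Sum>i<n. Z i \<omega>) = X \<omega>)
                      \<and> (\<Sum>i<n. robustLVaR M Y (L i) (Z i))
                          = infconv M XX n (\<lambda>i. robustLVaR M Y (L i)) X"
        unfolding Let_def
        apply (intro conjI)
        apply (rule conjunct1[OF Z])
        apply (rule conjunct1[OF conjunct2[OF Z]])
        apply (rule eqZ)
        done
    qed
  qed
  show ?thesis
  proof (rule conjI)
    show "\<forall>X\<in>XX. infconv M XX n (\<lambda>i. robustLVaR M Y (L i)) X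
           = Inf {ereal x | x. integral\<^sup>L M (\<lambda>\<omega>. Y \<omega> * indicator {\<omega>\<in>space M. X \<omega> > x} \<omega>)
                                 \<le> Lbar n L x}"
    proof
    fix X assume "X \<in> XX"
    then show "infconv M XX n (\<lambda>i. robustLVaR M Y (L i)) X
           = Inf {ereal x | x. integral\<^sup>L M (\<lambda>\<omega>. Y \<omega> * indicator {\<omega>\<in>space M. X \<omega> > x} \<omega>)
                                 \<le> Lbar n L x}" using part1 unfolding R_def by blast
    qed
  next
    show "\<forall>X\<in>XX. \<forall>xs::real.
           Inf {ereal x | x. integral\<^sup>L M (\<lambda>\<omega>. Y \<omega> * indicator {\<omega>\<in>space M. X \<omega> > x} \<omega>)
                                 \<le> Lbar n L x} = ereal xs
           \<and> continuous (at_right xs) (Lbar n L)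
         \<longrightarrow> (\<exists>ys A. (\<Sum>i<n. ys i) = xs \<and> (\<Sum>i<n. L i (ys i)) = Lbar n L xs
                    \<and> (\<forall>i<n. A i \<in> sets M) \<and> disjoint_family_on A {..<n}
                    \<and> (\<Union>i<n. A i) = space M
                    \<and> (\<forall>i<n. integral\<^sup>L M (\<lambda>\<omega>. Y \<omega> * indicator ({\<omega>\<in>space M. X \<omega> > xs} \<inter> A i) \<omega>)
                              \<le> L i (ys i)))
           \<and> (\<forall>ys A. (\<Sum>i<n. ys i) = xs \<and> (\<Sum>i<n. L i (ys i)) = Lbar n L xs
                    \<and> (\<forall>i<n. A i \<in> sets M) \<and> disjoint_family_on A {..<n}
                    \<and> (\<Union>i<n. A i) = space M
                    \<and> (\<forall>i<n. integral\<^sup>L M (\<lambda>\<omega>. Y \<omega> * indicator ({\<omega>\<in>space M. X \<omega> > xs} \<inter> A i) \<omega>)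
                              \<le> L i (ys i))
                \<longrightarrow> (let Z = (\<lambda>i \<omega>. (X \<omega> - xs) * indicator (A i) \<omega> + ys i) in
                      (\<forall>i<n. Z i \<in> XX) \<and> (\<forall>\<omega>\<in>space M. (\<Sum>i<n. Z i \<omega>) = X \<omega>)
                      \<and> (\<Sum>i<n. robustLVaR M Y (L i) (Z i))
                          = infconv M XX n (\<lambda>i. robustLVaR M Y (L i)) X))"
    proof (intro ballI allI impI)
    fix X xs assume X: "X \<in> XX" and H: "Inf {ereal x | x. integral\<^sup>L M (\<lambda>\<omega>. Y \<omega> * indicator {\<omega>\<in>space M. X \<omega> > x} \<omega>)
                                 \<le> Lbar n L x} = ereal xs \<and> continuous (at_right xs) (Lbar n L)"
    then have RX: "R X = ereal xs" and cont: "continuous (at_right xs) (Lbar n L)" unfolding R_def by auto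
    show "(\<exists>ys A. (\<Sum>i<n. ys i) = xs \<and> (\<Sum>i<n. L i (ys i)) = Lbar n L xs
                    \<and> (\<forall>i<n. A i \<in> sets M) \<and> disjoint_family_on A {..<n}
                    \<and> (\<Union>i<n. A i) = space M
                    \<and> (\<forall>i<n. integral\<^sup>L M (\<lambda>\<omega>. Y \<omega> * indicator ({\<omega>\<in>space M. X \<omega> > xs} \<inter> A i) \<omega>)
                              \<le> L i (ys i)))
           \<and> (\<forall>ys A. (\<Sum>i<n. ys i) = xs \<and> (\<Sum>i<n. L i (ys i)) = Lbar n L xs
                    \<and> (\<forall>i<n. A i \<in> sets M) \<and> disjoint_family_on A {..<n}
                    \<and> (\<Union>i<n. A i) = space M
                    \<and> (\<forall>i<n. integral\<^sup>L M (\<lambda>\<omega>. Y \<omega> * indicator ({\<omega>\<in>space M. X \<omega> > xs} \<inter> A i) \<omega>)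
                              \<le> L i (ys i))
                \<longrightarrow> (let Z = (\<lambda>i \<omega>. (X \<omega> - xs) * indicator (A i) \<omega> + ys i) in
                      (\<forall>i<n. Z i \<in> XX) \<and> (\<forall>\<omega>\<in>space M. (\<Sum>i<n. Z i \<omega>) = X \<omega>)
                      \<and> (\<Sum>i<n. robustLVaR M Y (L i) (Z i))
                          = infconv M XX n (\<lambda>i. robustLVaR M Y (L i)) X))"
      by (rule part2[OF X RX cont])
    qed
  qed
qed

end
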